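(* For $\kappa>0$ and $0\le\rho<1$ define $$C_s^{\lim}(\kappa,\rho)=\log(1+\kappa)+\log\!\left(\frac12+\sqrt{\frac14-\frac{\rho\kappa}{(1+\kappa)^2}}\right).$$ Then for all such $\kappa$ and $\rho$, $$(1-\rho)\,C_s^{\lim}(\kappa,0)\le C_s^{\lim}(\kappa,\rho)\le C_s^{\lim}(\kappa,0).$$
   Context: $C_s^{\lim}(\kappa,\rho)$ is the high-SNR limit of the ergodic secrecy capacity of a correlated Rayleigh fading wiretap channel with average channel gain ratio $\kappa=\mathbb{E}[H_M]/\mathbb{E}[H_E]$ and power correlation coefficient $\rho$ between the main and eavesdropper channel power gains; note $C_s^{\lim}(\kappa,0)=\log(1+\kappa)$. *)

theory Defs
  imports Complex_Main
begin

definition Cs_lim :: "real \<Rightarrow> real \<Rightarrow> real" where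
  "Cs_lim \<kappa> \<rho> = ln (1 + \<kappa>) + ln (1/2 + sqrt (1/4 - \<rho> * \<kappa> / (1 + \<kappa>)^2))"

end

theory Submission
  imports Defs "HOL-Analysis.Analysis"
begin

lemma sqrt_conc:
  fixes x y t :: real
  assumes "0 \<le> x" "0 \<le> y" "0 \<le> t" "t \<le> 1"
  shows "(1-t)* sqrt x + t* sqrt y \<le> sqrt ((1-t)*x + t*y)"
proof (rule real_le_rsqrt)
  have g: "sqrt x * sqrt y \<le> (x+y)/2"
    using assms arith_geo_mean_sqrt[of x y] by (simp add: real_sqrt_mult)
  have "((1-t)* sqrt x + t* sqrt y)^2 = (1-t)^2*x + t^2*y + 2*t*(1-t)*(sqrt x* sqrt y)"
    using assms by (simp add: power2_eq_square algebra_simps)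
  also have "\<dots> \<le> (1-t)^2*x + t^2*y + 2*t*(1-t)*((x+y)/2)"
    using g assms by (intro add_left_mono mult_left_mono) auto
  also have "\<dots> = (1-t)^2*x + t^2*y + t*(1-t)*(x+y)" by simp
  also have "\<dots> = (1-t)*x + t*y" by (simp add: power2_eq_square algebra_simps)
  finally show "((1-t)* sqrt x + t* sqrt y)^2 \<le> (1-t)*x + t*y" .
qed

lemma ln_conc:
  fixes m t :: real
  assumes "0 < m" "0 \<le> t" "t \<le> 1"
  shows "t * ln m \<le> ln ((1-t) + t*m)"
proof -
  have "exp ((1-t)*0 + t*ln m) \<le> (1-t)*exp 0 + t*exp (ln m)"
    using convex_onD[OF exp_convex, of t 0 "ln m"] assms by simp
  hence "exp (t*ln m) \<le> (1-t) + t*m" using assms by simp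
  moreover have "0 < (1-t) + t*m" using calculation exp_gt_zero[of "t*ln m"] by linarith
  ultimately have "ln (exp (t*ln m)) \<le> ln ((1-t) + t*m)" by (subst ln_le_cancel_iff) auto
  thus ?thesis by simp
qed

theorem corollary1:
  fixes \<kappa> \<rho> :: real
  assumes "\<kappa> > 0" and "0 \<le> \<rho>" and "\<rho> < 1"
  shows "(1 - \<rho>) * Cs_lim \<kappa> 0 \<le> Cs_lim \<kappa> \<rho> \<and> Cs_lim \<kappa> \<rho> \<le> Cs_lim \<kappa> 0"
proof -
  define a where "a = \<kappa> / (1+\<kappa>)^2"
  have a0: "0 \<le> a" using assms by (simp add: a_def)
  have aeq: "1/4 - a = ((1-\<kappa>)/(2*(1+\<kappa>)))^2"
  proof -
    have "(1+\<kappa>)^2 \<noteq> 0" using assms by simp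
    have "((1-\<kappa>)/(2*(1+\<kappa>)))^2 = (1-\<kappa>)^2/(4*(1+\<kappa>)^2)" by (simp add: power_divide power2_eq_square algebra_simps)
    moreover have "1/4 - a = ((1+\<kappa>)^2 - 4*\<kappa>)/(4*(1+\<kappa>)^2)"
    proof -
      have e1: "1/4 = (1+\<kappa>)^2/(4*(1+\<kappa>)^2)" using \<open>(1+\<kappa>)^2 \<noteq> 0\<close> by simp
      have e2: "a = (4*\<kappa>)/(4*(1+\<kappa>)^2)" unfolding a_def by simp
      show ?thesis unfolding diff_divide_distrib by (subst e1, subst e2) (rule refl)
    qed
    moreover have "(1+\<kappa>)^2 - 4*\<kappa> = (1-\<kappa>)^2" by (simp add: power2_eq_square algebra_simps)
    ultimately show ?thesis by simp
  qed
  have "0 \<le> 1/4 - a" unfolding aeq by (rule zero_le_power2)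
  hence a4: "a \<le> 1/4" by linarith
  have sq4: "sqrt (1/4) = (1/2::real)" by (rule real_sqrt_unique) (simp_all add: power2_eq_square)
  have C0: "Cs_lim \<kappa> 0 = ln (1+\<kappa>)" by (simp add: Cs_lim_def sq4)
  have Cr: "Cs_lim \<kappa> \<rho> = ln (1+\<kappa>) + ln (1/2 + sqrt (1/4 - \<rho>*a))"
    by (simp add: Cs_lim_def a_def)
  have s_le: "sqrt (1/4 - \<rho>*a) \<le> 1/2"
  proof -
    have "sqrt (1/4 - \<rho>*a) \<le> sqrt (1/4)" using a0 assms by (intro real_sqrt_le_mono) simp
    also have "sqrt (1/4) = (1/2::real)" by (rule sq4)
    finally show ?thesis .
  qed
  have ra: "\<rho>*a \<le> 1/4"
  proof -
    have "\<rho>*a \<le> 1*a" using assms a0 by (intro mult_right_mono) auto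
    thus ?thesis using a4 by simp
  qed
  have pos: "0 < 1/2 + sqrt (1/4 - \<rho>*a)" using ra by (intro add_pos_nonneg) simp_all
  have upper: "ln (1/2 + sqrt (1/4 - \<rho>*a)) \<le> 0"
    using pos s_le by simp
  define m where "m = 1/2 + sqrt (1/4 - a)"
  have sa: "sqrt (1/4 - a) = \<bar>1-\<kappa>\<bar>/(2*(1+\<kappa>))"
    using assms by (simp add: aeq real_sqrt_abs abs_divide)
  have m_ge: "1/(1+\<kappa>) \<le> m"
  proof -
    have "1/(1+\<kappa>) - 1/2 = (1-\<kappa>)/(2*(1+\<kappa>))" using assms by (simp add: field_simps)
    also have "\<dots> \<le> \<bar>1-\<kappa>\<bar>/(2*(1+\<kappa>))" using assms by (intro divide_right_mono) auto
    finally show ?thesis by (simp add: m_def sa)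
  qed
  have "0 < 1/(1+\<kappa>)" using assms by simp
  hence mpos: "0 < m" using m_ge by linarith
  have "(1-\<rho>)* sqrt (1/4) + \<rho>* sqrt (1/4 - a) \<le> sqrt ((1-\<rho>)*(1/4) + \<rho>*(1/4-a))"
    using assms a4 by (intro sqrt_conc) auto
  moreover have "(1-\<rho>)*(1/4) + \<rho>*(1/4-a) = 1/4 - \<rho>*a" by (simp add: field_simps)
  ultimately have "(1-\<rho>)*(1/2) + \<rho>* sqrt (1/4 - a) \<le> sqrt (1/4 - \<rho>*a)"
    by (simp only: sq4)
  note hh = this
  have lin: "(1-\<rho>) + \<rho>*m \<le> 1/2 + sqrt (1/4 - \<rho>*a)"
  proof -
    have "(1-\<rho>) + \<rho>*m = (1-\<rho>)*(1/2) + \<rho>* sqrt (1/4 - a) + 1/2" by (simp add: m_def field_simps)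
    thus ?thesis using hh by linarith
  qed
  have "\<rho> * ln m \<le> ln ((1-\<rho>) + \<rho>*m)" using ln_conc[OF mpos] assms by simp
  also have "\<dots> \<le> ln (1/2 + sqrt (1/4 - \<rho>*a))"
    using lin assms mpos pos by (subst ln_le_cancel_iff) (auto intro: add_pos_nonneg)
  finally have L1: "\<rho> * ln m \<le> ln (1/2 + sqrt (1/4 - \<rho>*a))" .
  have "-ln (1+\<kappa>) \<le> ln m"
  proof -
    have "ln (1/(1+\<kappa>)) \<le> ln m" using m_ge mpos assms by (subst ln_le_cancel_iff) auto
    moreover have "ln (1/(1+\<kappa>)) = - ln (1+\<kappa>)" using assms by (simp add: ln_div)
    ultimately show ?thesis by simp
  qed
  hence "-\<rho>*ln (1+\<kappa>) \<le> \<rho>*ln m" using assms mult_left_mono[of "-ln (1+\<kappa>)" "ln m" \<rho>] by simp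
  hence L2: "-\<rho>*ln (1+\<kappa>) \<le> ln (1/2 + sqrt (1/4 - \<rho>*a))" using L1 by linarith
  have "(1-\<rho>)*ln (1+\<kappa>) = ln (1+\<kappa>) + (-\<rho>*ln (1+\<kappa>))" by (simp add: algebra_simps)
  hence "(1 - \<rho>) * Cs_lim \<kappa> 0 \<le> Cs_lim \<kappa> \<rho>" unfolding C0 Cr using L2 by linarith
  moreover have "Cs_lim \<kappa> \<rho> \<le> Cs_lim \<kappa> 0" unfolding C0 Cr using upper by linarith
  ultimately show ?thesis by blast
qed

end
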